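(* Let $G$ be a connected graph with $\mu_t(G)=|\mathcal{S}(G)|$, and let $\{C_1,\dots,C_k\}$ be the partition of $\mathcal{S}(G)$ into true twin equivalence classes. Then for every integer $n\ge 2$, $$\mu_t(G\,\Box\,K_n)=\sum_{i=1}^{k}\max\{|C_i|,n\}.$$
   Context: All graphs are finite, simple and undirected; $K_n$ is the complete graph on $n$ vertices and $N_G[v]$ the closed neighborhood of $v$. The Cartesian product $G\,\Box\,H$ has vertex set $V(G)\times V(H)$, with $(x,y)$ adjacent to $(x',y')$ iff either $x=x'$ and $yy'\in E(H)$, or $xx'\in E(G)$ and $y=y'$. Let $F$ be a connected graph and $X\subseteq V(F)$. Two vertices $u,v\in V(F)$ are $X$-visible if there exists a shortest $u,v$-path in $F$ none of whose internal vertices belongs to $X$. $X$ is a total mutual-visibility set of $F$ if every two vertices of $F$ are $X$-visible (the empty set is allowed). $\mu_t(F)$ is the maximum cardinality of a total mutual-visibility set of $F$. A vertex is simplicial if its neighbors induce a complete graph; $\mathcal{S}(G)$ is the set of simplicial vertices of $G$. Two simplicial vertices $g,g'$ are in the same true twin class iff $N_G[g]=N_G[g']$. *)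

theory Defs
  imports Main
begin

definition simple_graph :: "'a set \<Rightarrow> ('a \<Rightarrow> 'a \<Rightarrow> bool) \<Rightarrow> bool" where
  "simple_graph V E \<longleftrightarrow> finite V \<and> (\<forall>x y. E x y \<longrightarrow> x \<in> V \<and> y \<in> V)
     \<and> (\<forall>x y. E x y \<longrightarrow> E y x) \<and> (\<forall>x. \<not> E x x)"

definition walk_betw :: "'a set \<Rightarrow> ('a \<Rightarrow> 'a \<Rightarrow> bool) \<Rightarrow> 'a \<Rightarrow> 'a list \<Rightarrow> 'a \<Rightarrow> bool" where
  "walk_betw V E u xs v \<longleftrightarrow> xs \<noteq> [] \<and> set xs \<subseteq> V \<and>
     (\<forall>i. Suc i < length xs \<longrightarrow> E (xs ! i) (xs ! Suc i)) \<and> hd xs = u \<and> last xs = v"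

definition connected_graph :: "'a set \<Rightarrow> ('a \<Rightarrow> 'a \<Rightarrow> bool) \<Rightarrow> bool" where
  "connected_graph V E \<longleftrightarrow> V \<noteq> {} \<and> (\<forall>u\<in>V. \<forall>v\<in>V. \<exists>xs. walk_betw V E u xs v)"

definition gdist :: "'a set \<Rightarrow> ('a \<Rightarrow> 'a \<Rightarrow> bool) \<Rightarrow> 'a \<Rightarrow> 'a \<Rightarrow> nat" where
  "gdist V E u v = (LEAST n. \<exists>xs. walk_betw V E u xs v \<and> length xs = Suc n)"

definition shortest_path :: "'a set \<Rightarrow> ('a \<Rightarrow> 'a \<Rightarrow> bool) \<Rightarrow> 'a \<Rightarrow> 'a list \<Rightarrow> 'a \<Rightarrow> bool" where
  "shortest_path V E u xs v \<longleftrightarrow> walk_betw V E u xs v \<and> length xs = Suc (gdist V E u v)"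

definition X_visible :: "'a set \<Rightarrow> ('a \<Rightarrow> 'a \<Rightarrow> bool) \<Rightarrow> 'a set \<Rightarrow> 'a \<Rightarrow> 'a \<Rightarrow> bool" where
  "X_visible V E X u v \<longleftrightarrow>
     (\<exists>xs. shortest_path V E u xs v \<and> set (butlast (tl xs)) \<inter> X = {})"

definition total_mv_set :: "'a set \<Rightarrow> ('a \<Rightarrow> 'a \<Rightarrow> bool) \<Rightarrow> 'a set \<Rightarrow> bool" where
  "total_mv_set V E X \<longleftrightarrow> X \<subseteq> V \<and> (\<forall>u\<in>V. \<forall>v\<in>V. X_visible V E X u v)"

definition mu_t :: "'a set \<Rightarrow> ('a \<Rightarrow> 'a \<Rightarrow> bool) \<Rightarrow> nat" where
  "mu_t V E = Max {card X | X. total_mv_set V E X}"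

definition simplicial :: "'a set \<Rightarrow> ('a \<Rightarrow> 'a \<Rightarrow> bool) \<Rightarrow> 'a \<Rightarrow> bool" where
  "simplicial V E v \<longleftrightarrow> v \<in> V \<and> (\<forall>x y. E v x \<longrightarrow> E v y \<longrightarrow> x \<noteq> y \<longrightarrow> E x y)"

definition simplicial_set :: "'a set \<Rightarrow> ('a \<Rightarrow> 'a \<Rightarrow> bool) \<Rightarrow> 'a set" where
  "simplicial_set V E = {v \<in> V. simplicial V E v}"

definition closed_nbhd :: "'a set \<Rightarrow> ('a \<Rightarrow> 'a \<Rightarrow> bool) \<Rightarrow> 'a \<Rightarrow> 'a set" where
  "closed_nbhd V E v = insert v {u \<in> V. E v u}"

definition simplicial_twin_classes :: "'a set \<Rightarrow> ('a \<Rightarrow> 'a \<Rightarrow> bool) \<Rightarrow> 'a set set" where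
  "simplicial_twin_classes V E =
     (\<lambda>g. {g' \<in> simplicial_set V E. closed_nbhd V E g' = closed_nbhd V E g}) ` simplicial_set V E"

definition cart_edges :: "('a \<Rightarrow> 'a \<Rightarrow> bool) \<Rightarrow> ('b \<Rightarrow> 'b \<Rightarrow> bool) \<Rightarrow> 'a \<times> 'b \<Rightarrow> 'a \<times> 'b \<Rightarrow> bool" where
  "cart_edges E1 E2 p q \<longleftrightarrow>
     (fst p = fst q \<and> E2 (snd p) (snd q)) \<or> (E1 (fst p) (fst q) \<and> snd p = snd q)"

definition K_vertices :: "nat \<Rightarrow> nat set" where
  "K_vertices n = {0..<n}"

definition K_edges :: "nat \<Rightarrow> nat \<Rightarrow> bool" where
  "K_edges i j \<longleftrightarrow> i \<noteq> j"

end

theory Submission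
  imports Defs
begin


lemma walk_iff: "walk_betw V E u xs v \<longleftrightarrow> xs \<noteq> [] \<and> set xs \<subseteq> V \<and> successively E xs \<and> hd xs = u \<and> last xs = v"
  unfolding walk_betw_def successively_conv_nth by blast

lemma gdist_le: "walk_betw V E u xs v \<Longrightarrow> Suc (gdist V E u v) \<le> length xs"
proof -
  assume w: "walk_betw V E u xs v"
  then have "xs \<noteq> []" by (simp add: walk_iff)
  then have "length xs = Suc (length xs - 1)" by (cases xs) auto
  with w have "gdist V E u v \<le> length xs - 1" unfolding gdist_def
    by (intro Least_le) blast
  then show ?thesis using \<open>xs \<noteq> []\<close> by (cases xs) auto
qed

lemma gdist_ex: "walk_betw V E u xs v \<Longrightarrow> \<exists>ys. walk_betw V E u ys v \<and> length ys = Suc (gdist V E u v)"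
proof -
  assume w: "walk_betw V E u xs v"
  then have "xs \<noteq> []" by (simp add: walk_iff)
  then have "length xs = Suc (length xs - 1)" by (cases xs) auto
  with w have "\<exists>n. \<exists>xs. walk_betw V E u xs v \<and> length xs = Suc n" by blast
  then show ?thesis unfolding gdist_def by (rule LeastI_ex)
qed

lemma shortest_pathI: "walk_betw V E u xs v \<Longrightarrow> length xs \<le> Suc (gdist V E u v) \<Longrightarrow> shortest_path V E u xs v"
  unfolding shortest_path_def using gdist_le by (metis le_antisym)

lemma internal_split:
  assumes "b \<in> set (butlast (tl xs))"
  shows "\<exists>as a c bs. xs = as @ [a,b,c] @ bs"
proof -
  obtain ys zs where yz: "butlast (tl xs) = ys @ b # zs" using assms by (meson split_list)
  have ne: "tl xs \<noteq> []" using assms by auto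
  then have xs: "xs = hd xs # tl xs" by (cases xs) auto
  have "tl xs = butlast (tl xs) @ [last (tl xs)]" using ne by simp
  then have "xs = (hd xs # ys) @ b # (zs @ [last (tl xs)])" using xs yz by (metis append.assoc append_Cons append_Nil)
  moreover have "hd xs # ys = butlast (hd xs # ys) @ [last (hd xs # ys)]" by simp
  moreover have "zs @ [last (tl xs)] = hd (zs @ [last (tl xs)]) # tl (zs @ [last (tl xs)])" by simp
  ultimately have "xs = butlast (hd xs # ys) @ [last (hd xs # ys), b, hd (zs @ [last (tl xs)])] @ tl (zs @ [last (tl xs)])"
    by (metis append.assoc append_Cons append_Nil)
  then show ?thesis by blast
qed

lemma simplicial_not_internal:
  assumes sg: "simple_graph V E" and sp: "shortest_path V E u xs v"
    and b: "b \<in> set (butlast (tl xs))"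
  shows "\<not> simplicial V E b"
proof
  assume s: "simplicial V E b"
  obtain as a c bs where xs: "xs = as @ [a,b,c] @ bs" using internal_split[OF b] by blast
  have w: "walk_betw V E u xs v" and len: "length xs = Suc (gdist V E u v)" using sp by (auto simp: shortest_path_def)
  have sw: "successively E xs" using w by (simp add: walk_iff)
  have Eab: "E a b" and Ebc: "E b c" using sw unfolding xs by (auto simp: successively_append_iff)
  have Eba: "E b a" using sg Eab unfolding simple_graph_def by blast
  define ys where "ys = (if a = c then as @ [a] @ bs else as @ [a,c] @ bs)"
  have "a \<noteq> c \<Longrightarrow> E a c" using s Eba Ebc unfolding simplicial_def by blast
  then have "successively E ys" using sw unfolding xs ys_def
    by (auto simp: successively_append_iff successively_Cons)
  moreover have "set ys \<subseteq> set xs" unfolding xs ys_def by auto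
  moreover have "hd ys = hd xs" unfolding xs ys_def by (cases as) auto
  moreover have "last ys = last xs" unfolding xs ys_def by (cases bs rule: rev_cases) auto
  ultimately have "walk_betw V E u ys v" using w unfolding walk_iff ys_def by auto
  then have "Suc (gdist V E u v) \<le> length ys" by (rule gdist_le)
  moreover have "length ys < length xs" unfolding xs ys_def by auto
  ultimately show False using len by simp
qed

lemma tmv_union_S:
  assumes sg: "simple_graph V E" and t: "total_mv_set V E T"
  shows "total_mv_set V E (T \<union> simplicial_set V E)"
  using t unfolding total_mv_set_def X_visible_def
proof (intro conjI ballI)
  assume a: "T \<subseteq> V \<and> (\<forall>u\<in>V. \<forall>v\<in>V. \<exists>xs. shortest_path V E u xs v \<and> set (butlast (tl xs)) \<inter> T = {})"
  then show "T \<union> simplicial_set V E \<subseteq> V" by (auto simp: simplicial_set_def)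
  fix u v assume "u \<in> V" "v \<in> V"
  then obtain xs where xs: "shortest_path V E u xs v" "set (butlast (tl xs)) \<inter> T = {}" using a by blast
  have "set (butlast (tl xs)) \<inter> simplicial_set V E = {}"
    using simplicial_not_internal[OF sg xs(1)] by (auto simp: simplicial_set_def)
  then show "\<exists>xs. shortest_path V E u xs v \<and> set (butlast (tl xs)) \<inter> (T \<union> simplicial_set V E) = {}"
    using xs by blast
qed

lemma mu_t_ge:
  assumes sg: "simple_graph V E" and t: "total_mv_set V E T"
  shows "card T \<le> mu_t V E"
proof -
  have fin: "finite V" using sg by (simp add: simple_graph_def)
  have "{card X | X. total_mv_set V E X} \<subseteq> {..card V}"
    using fin by (auto simp: total_mv_set_def intro: card_mono)
  then have "finite {card X | X. total_mv_set V E X}" using finite_subset by blast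
  then show ?thesis unfolding mu_t_def using t by (intro Max_ge) auto
qed

lemma tmv_subset_S:
  assumes sg: "simple_graph V E" and mu: "mu_t V E = card (simplicial_set V E)"
    and t: "total_mv_set V E T"
  shows "T \<subseteq> simplicial_set V E"
proof -
  have fin: "finite V" using sg by (simp add: simple_graph_def)
  have t2: "total_mv_set V E (T \<union> simplicial_set V E)" by (rule tmv_union_S[OF sg t])
  then have "card (T \<union> simplicial_set V E) \<le> card (simplicial_set V E)"
    using mu_t_ge[OF sg t2] mu by simp
  moreover have "finite (T \<union> simplicial_set V E)" using t2 fin finite_subset by (auto simp: total_mv_set_def)
  ultimately have "simplicial_set V E = T \<union> simplicial_set V E"
    by (metis Un_upper2 card_mono card_subset_eq le_antisym)
  then show ?thesis by blast
qed



lemma EH_iff: "cart_edges E K_edges a b \<longleftrightarrow> (fst a = fst b \<and> snd a \<noteq> snd b) \<or> (E (fst a) (fst b) \<and> snd a = snd b)"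
  by (auto simp: cart_edges_def K_edges_def)

lemma proj:
  assumes "ws \<noteq> []" "set ws \<subseteq> V \<times> K" "successively (cart_edges E K_edges) ws"
  shows "(successively E (map fst ws) \<and> (\<forall>x\<in>set ws. snd x = snd (hd ws))) \<or>
         (\<exists>gs. walk_betw V E (fst (hd ws)) gs (fst (last ws)) \<and> length gs < length ws)"
  using assms
proof (induction ws)
  case Nil
  then show ?case by simp
next
  case (Cons w ws)
  show ?case
  proof (cases "ws = []")
    case True
    then show ?thesis by simp
  next
    case False
    have st: "cart_edges E K_edges w (hd ws)" and sws: "successively (cart_edges E K_edges) ws"
      using Cons.prems(3) False by (simp_all add: successively_Cons)
    have wV: "fst w \<in> V" using Cons.prems by auto
    have IH: "(successively E (map fst ws) \<and> (\<forall>x\<in>set ws. snd x = snd (hd ws))) \<or>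
         (\<exists>gs. walk_betw V E (fst (hd ws)) gs (fst (last ws)) \<and> length gs < length ws)"
      using Cons.prems(2) by (intro Cons.IH[OF False _ sws]) auto
    have lst: "last (w # ws) = last ws" using False by simp
    from IH show ?thesis
    proof
      assume a: "successively E (map fst ws) \<and> (\<forall>x\<in>set ws. snd x = snd (hd ws))"
      show ?thesis
      proof (cases "fst w = fst (hd ws)")
        case True
        have "walk_betw V E (fst (hd ws)) (map fst ws) (fst (last ws))"
          using a False Cons.prems by (auto simp: walk_iff hd_map last_map)
        then show ?thesis using True lst by auto
      next
        case fne: False
        then have "E (fst w) (fst (hd ws)) \<and> snd w = snd (hd ws)" using st by (simp add: EH_iff)
        then have e: "E (fst w) (fst (hd ws))" and sn: "snd w = snd (hd ws)" by auto
        have "successively E (map fst (w # ws))"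
          using a False e by (simp add: successively_Cons hd_map)
        moreover have "\<forall>x\<in>set (w # ws). snd x = snd (hd (w#ws))"
          using a sn by simp
        ultimately show ?thesis by blast
      qed
    next
      assume "\<exists>gs. walk_betw V E (fst (hd ws)) gs (fst (last ws)) \<and> length gs < length ws"
      then obtain gs where gs: "walk_betw V E (fst (hd ws)) gs (fst (last ws))" "length gs < length ws" by blast
      show ?thesis
      proof (cases "fst w = fst (hd ws)")
        case True
        then show ?thesis using gs lst by auto
      next
        case fne: False
        then have e: "E (fst w) (fst (hd ws))" using st by (simp add: EH_iff)
        have "walk_betw V E (fst w) (fst w # gs) (fst (last ws))"
          using gs e wV by (auto simp: walk_iff successively_Cons)
        then show ?thesis using gs lst by auto
      qed
    qed
  qed
qed


lemma proj_walk:
  assumes "walk_betw (V \<times> K) (cart_edges E K_edges) p ws q"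
  shows "(walk_betw V E (fst p) (map fst ws) (fst q) \<and> (\<forall>x\<in>set ws. snd x = snd p)) \<or>
         (\<exists>gs. walk_betw V E (fst p) gs (fst q) \<and> length gs < length ws)"
proof -
  have a: "ws \<noteq> []" "set ws \<subseteq> V \<times> K" "successively (cart_edges E K_edges) ws" "hd ws = p" "last ws = q"
    using assms by (auto simp: walk_iff)
  have "set (map fst ws) \<subseteq> V" using a(2) by auto
  then show ?thesis using proj[OF a(1-3)] a by (auto simp: walk_iff hd_map last_map)
qed

lemma lift_walk:
  assumes "walk_betw V E u gs v" "i \<in> K"
  shows "walk_betw (V \<times> K) (cart_edges E K_edges) (u,i) (map (\<lambda>g. (g,i)) gs) (v,i)"
proof -
  have a: "gs \<noteq> []" "set gs \<subseteq> V" "successively E gs" "hd gs = u" "last gs = v"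
    using assms(1) by (auto simp: walk_iff)
  have "successively (\<lambda>x y. cart_edges E K_edges (x,i) (y,i)) gs"
    using a(3) by (rule successively_mono) (simp add: cart_edges_def)
  then have "successively (cart_edges E K_edges) (map (\<lambda>g. (g,i)) gs)"
    by (simp add: successively_map)
  moreover have "set (map (\<lambda>g. (g,i)) gs) \<subseteq> V \<times> K" using a(2) assms(2) by auto
  ultimately show ?thesis using a(1,4,5) by (simp add: walk_iff hd_map last_map)
qed

lemma walk_snoc:
  assumes "walk_betw V E u xs v" "E v w" "w \<in> V"
  shows "walk_betw V E u (xs @ [w]) w"
  using assms by (auto simp: walk_iff successively_append_iff)

lemma hdist:
  assumes con: "connected_graph V E"
    and uv: "u \<in> V" "v \<in> V" and ij: "i < n" "j < n"
  shows "gdist (V \<times> K_vertices n) (cart_edges E K_edges) (u,i) (v,j) = gdist V E u v + (if i = j then 0 else 1)"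
proof -
  let ?VH = "V \<times> K_vertices n" and ?EH = "cart_edges E K_edges"
  have "\<exists>ps0. walk_betw V E u ps0 v" using con uv by (simp add: connected_graph_def)
  then obtain ps0 where ps0: "walk_betw V E u ps0 v" by blast
  obtain ps where ps: "walk_betw V E u ps v" "length ps = Suc (gdist V E u v)" using gdist_ex[OF ps0] by blast
  have iK: "i \<in> K_vertices n" "j \<in> K_vertices n" using ij by (auto simp: K_vertices_def)
  have lw: "walk_betw ?VH ?EH (u,i) (map (\<lambda>g. (g,i)) ps) (v,i)" by (rule lift_walk[OF ps(1) iK(1)])
  have "\<exists>ws. walk_betw ?VH ?EH (u,i) ws (v,j) \<and> length ws = Suc (gdist V E u v + (if i = j then 0 else 1))"
  proof (cases "i = j")
    case True
    show ?thesis using lw ps True by (intro exI[of _ "map (\<lambda>g. (g,i)) ps"]) simp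
  next
    case False
    have e: "?EH (v,i) (v,j)" using False by (simp add: cart_edges_def K_edges_def)
    have m: "(v,j) \<in> ?VH" using uv iK by simp
    have "walk_betw ?VH ?EH (u,i) (map (\<lambda>g. (g,i)) ps @ [(v,j)]) (v,j)"
      by (rule walk_snoc[OF lw e m])
    then show ?thesis using False ps by (intro exI[of _ "map (\<lambda>g. (g,i)) ps @ [(v,j)]"]) simp
  qed
  then obtain ws0 where ws0: "walk_betw ?VH ?EH (u,i) ws0 (v,j)" "length ws0 = Suc (gdist V E u v + (if i = j then 0 else 1))" by blast
  have le1: "gdist ?VH ?EH (u,i) (v,j) \<le> gdist V E u v + (if i = j then 0 else 1)"
    using gdist_le[OF ws0(1)] ws0(2) by simp
  obtain ws where ws: "walk_betw ?VH ?EH (u,i) ws (v,j)" "length ws = Suc (gdist ?VH ?EH (u,i) (v,j))"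
    using gdist_ex[OF ws0(1)] by blast
  have "gdist V E u v + (if i = j then 0 else 1) \<le> gdist ?VH ?EH (u,i) (v,j)"
    using proj_walk[OF ws(1)]
  proof
    assume a: "walk_betw V E (fst (u, i)) (map fst ws) (fst (v, j)) \<and> (\<forall>x\<in>set ws. snd x = snd (u, i))"
    have ne: "ws \<noteq> []" and lw2: "last ws = (v,j)" using ws(1) by (simp_all add: walk_iff)
    have "last ws \<in> set ws" using ne by (rule last_in_set)
    then have "snd (last ws) = i" using a by simp
    then have "i = j" using lw2 by simp
    then show ?thesis using gdist_le[of V E u "map fst ws" v] a ws(2) by simp
  next
    assume "\<exists>gs. walk_betw V E (fst (u, i)) gs (fst (v, j)) \<and> length gs < length ws"
    then obtain gs where "walk_betw V E u gs v" "length gs < length ws" by auto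
    moreover have "(if i = j then 0 else 1) \<le> (1::nat)" by simp
    ultimately show ?thesis using gdist_le[of V E u gs v] ws(2) by linarith
  qed
  with le1 show ?thesis by simp
qed



lemma sg_facts:
  assumes "simple_graph V E"
  shows "finite V" "\<And>x y. E x y \<Longrightarrow> x \<in> V" "\<And>x y. E x y \<Longrightarrow> y \<in> V"
    "\<And>x y. E x y \<Longrightarrow> E y x" "\<And>x. \<not> E x x"
  using assms unfolding simple_graph_def by blast+

lemma layer_tmv:
  assumes sg: "simple_graph V E" and con: "connected_graph V E"
    and X: "total_mv_set (V \<times> K_vertices n) (cart_edges E K_edges) X" and i: "i < n"
  shows "total_mv_set V E {g. (g,i) \<in> X}"
  unfolding total_mv_set_def
proof (intro conjI ballI)
  have XV: "X \<subseteq> V \<times> K_vertices n" using X by (simp add: total_mv_set_def)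
  then show "{g. (g,i) \<in> X} \<subseteq> V" by blast
  fix u v assume uv: "u \<in> V" "v \<in> V"
  have "(u,i) \<in> V \<times> K_vertices n" "(v,i) \<in> V \<times> K_vertices n" using uv i by (auto simp: K_vertices_def)
  then have "X_visible (V \<times> K_vertices n) (cart_edges E K_edges) X (u,i) (v,i)"
    using X by (simp add: total_mv_set_def)
  then obtain ws where ws: "shortest_path (V \<times> K_vertices n) (cart_edges E K_edges) (u,i) ws (v,i)"
    "set (butlast (tl ws)) \<inter> X = {}" unfolding X_visible_def by blast
  have w: "walk_betw (V \<times> K_vertices n) (cart_edges E K_edges) (u,i) ws (v,i)" using ws(1) by (simp add: shortest_path_def)
  have len: "length ws = Suc (gdist V E u v)"
    using ws(1) hdist[OF con uv i i] by (simp add: shortest_path_def)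
  show "X_visible V E {g. (g,i) \<in> X} u v"
    using proj_walk[OF w]
  proof
    assume "\<exists>gs. walk_betw V E (fst (u, i)) gs (fst (v, i)) \<and> length gs < length ws"
    then obtain gs where "walk_betw V E u gs v" "length gs < length ws" by auto
    then show ?thesis using gdist_le[of V E u gs v] len by simp
  next
    assume a: "walk_betw V E (fst (u, i)) (map fst ws) (fst (v, i)) \<and> (\<forall>x\<in>set ws. snd x = snd (u, i))"
    have sp: "shortest_path V E u (map fst ws) v" using a len by (intro shortest_pathI) auto
    have "set (butlast (tl (map fst ws))) \<inter> {g. (g,i) \<in> X} = {}"
    proof (rule ccontr)
      assume "set (butlast (tl (map fst ws))) \<inter> {g. (g,i) \<in> X} \<noteq> {}"
      then obtain g where g: "g \<in> set (map fst (butlast (tl ws)))" "(g,i) \<in> X"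
        by (auto simp: map_butlast map_tl)
      then obtain x where x: "x \<in> set (butlast (tl ws))" "g = fst x" by auto
      have "x \<in> set ws" using x(1) by (metis in_set_butlastD list.sel(2) list.set_sel(2))
      then have "snd x = i" using a by simp
      then have "x = (g,i)" using x(2) by (cases x) simp
      then show False using x(1) g(2) ws(2) by blast
    qed
    then show ?thesis using sp unfolding X_visible_def by blast
  qed
qed

lemma X_sub_S:
  assumes sg: "simple_graph V E" and con: "connected_graph V E"
    and mu: "mu_t V E = card (simplicial_set V E)"
    and X: "total_mv_set (V \<times> K_vertices n) (cart_edges E K_edges) X"
  shows "X \<subseteq> simplicial_set V E \<times> K_vertices n"
proof
  fix p assume p: "p \<in> X"
  obtain g i where gi: "p = (g,i)" by (cases p)
  have "i < n" using X p gi by (auto simp: total_mv_set_def K_vertices_def)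
  then have "{g. (g,i) \<in> X} \<subseteq> simplicial_set V E"
    using tmv_subset_S[OF sg mu layer_tmv[OF sg con X]] by blast
  then show "p \<in> simplicial_set V E \<times> K_vertices n" using p gi \<open>i < n\<close> by (auto simp: K_vertices_def)
qed

lemma gdist_adj:
  assumes sg: "simple_graph V E" and e: "E h g"
  shows "gdist V E h g = 1"
proof -
  have hg: "h \<in> V" "g \<in> V" using sg_facts[OF sg] e by blast+
  have w: "walk_betw V E h [h,g] g" using hg e by (simp add: walk_iff)
  have le: "gdist V E h g \<le> 1" using gdist_le[OF w] by simp
  obtain ys where ys: "walk_betw V E h ys g" "length ys = Suc (gdist V E h g)" using gdist_ex[OF w] by blast
  have "gdist V E h g \<noteq> 0"
  proof
    assume "gdist V E h g = 0"
    then obtain y where "ys = [y]" using ys(2) by (cases ys) auto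
    then have "h = g" using ys(1) by (auto simp: walk_iff)
    then show False using e sg_facts(5)[OF sg] by blast
  qed
  with le show ?thesis by simp
qed

lemma adj_same:
  assumes sg: "simple_graph V E" and con: "connected_graph V E"
    and X: "total_mv_set (V \<times> K_vertices n) (cart_edges E K_edges) X"
    and e: "E g h" and gi: "(g,i) \<in> X" and hj: "(h,j) \<in> X"
  shows "i = j"
proof (rule ccontr)
  assume ij: "i \<noteq> j"
  have XV: "X \<subseteq> V \<times> K_vertices n" using X by (simp add: total_mv_set_def)
  have "(g,i) \<in> V \<times> K_vertices n" "(h,j) \<in> V \<times> K_vertices n" using XV gi hj by blast+
  then have g: "g \<in> V" "i < n" and h: "h \<in> V" "j < n" by (simp_all add: K_vertices_def)
  have "(h,i) \<in> V \<times> K_vertices n" "(g,j) \<in> V \<times> K_vertices n" using g h by (auto simp: K_vertices_def)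
  then have "X_visible (V \<times> K_vertices n) (cart_edges E K_edges) X (h,i) (g,j)"
    using X by (simp add: total_mv_set_def)
  then obtain ws where ws: "shortest_path (V \<times> K_vertices n) (cart_edges E K_edges) (h,i) ws (g,j)"
    "set (butlast (tl ws)) \<inter> X = {}" unfolding X_visible_def by blast
  have ehg: "E h g" using sg_facts(4)[OF sg e] .
  have "length ws = 3"
    using ws(1) hdist[OF con h(1) g(1) g(2) h(2)] gdist_adj[OF sg ehg] ij by (simp add: shortest_path_def)
  then obtain a b c where abc: "ws = [a,b,c]"
    by (auto simp: numeral_3_eq_3 length_Suc_conv)
  have w: "walk_betw (V \<times> K_vertices n) (cart_edges E K_edges) (h,i) [a,b,c] (g,j)"
    using ws(1) abc by (simp add: shortest_path_def)
  then have a: "a = (h,i)" and c: "c = (g,j)" by (simp_all add: walk_iff)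
  have "successively (cart_edges E K_edges) [a,b,c]" using w by (simp only: walk_iff)
  then have e1: "cart_edges E K_edges a b" and e2: "cart_edges E K_edges b c" by simp_all
  have bX: "b \<notin> X" using ws(2) abc by simp
  obtain b1 b2 where b: "b = (b1,b2)" by (cases b)
  have gh: "g \<noteq> h" using e sg_facts(5)[OF sg] by blast
  have f1: "(h = b1 \<and> i \<noteq> b2) \<or> (E h b1 \<and> i = b2)" using e1 unfolding a b by (simp add: EH_iff)
  have f2: "(b1 = g \<and> b2 \<noteq> j) \<or> (E b1 g \<and> b2 = j)" using e2 unfolding c b by (simp add: EH_iff)
  have "b = (g,i) \<or> b = (h,j)" using f1 f2 gh ij unfolding b by blast
  then show False using bX gi hj by blast
qed

definition twcls :: "'a set \<Rightarrow> ('a \<Rightarrow> 'a \<Rightarrow> bool) \<Rightarrow> 'a \<Rightarrow> 'a set" where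
  "twcls V E g = {g' \<in> simplicial_set V E. closed_nbhd V E g' = closed_nbhd V E g}"

lemma classes_eq: "simplicial_twin_classes V E = twcls V E ` simplicial_set V E"
  unfolding simplicial_twin_classes_def twcls_def by simp

lemma classes_props:
  assumes sg: "simple_graph V E"
  shows "\<Union>(simplicial_twin_classes V E) = simplicial_set V E"
    and "\<And>C. C \<in> simplicial_twin_classes V E \<Longrightarrow> C \<subseteq> simplicial_set V E"
    and "\<And>C D. C \<in> simplicial_twin_classes V E \<Longrightarrow> D \<in> simplicial_twin_classes V E \<Longrightarrow> C \<noteq> D \<Longrightarrow> C \<inter> D = {}"
    and "\<And>C x y. C \<in> simplicial_twin_classes V E \<Longrightarrow> x \<in> C \<Longrightarrow> y \<in> C \<Longrightarrow> x \<noteq> y \<Longrightarrow> E x y"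
    and "finite (simplicial_twin_classes V E)"
    and "\<And>C. C \<in> simplicial_twin_classes V E \<Longrightarrow> finite C"
    and "\<And>C. C \<in> simplicial_twin_classes V E \<Longrightarrow> C \<noteq> {}"
proof -
  have fin: "finite (simplicial_set V E)" using sg_facts(1)[OF sg] by (simp add: simplicial_set_def)
  show "\<Union>(simplicial_twin_classes V E) = simplicial_set V E"
    unfolding classes_eq twcls_def by blast
  show C: "\<And>C. C \<in> simplicial_twin_classes V E \<Longrightarrow> C \<subseteq> simplicial_set V E"
    unfolding classes_eq twcls_def by blast
  show "\<And>C D. C \<in> simplicial_twin_classes V E \<Longrightarrow> D \<in> simplicial_twin_classes V E \<Longrightarrow> C \<noteq> D \<Longrightarrow> C \<inter> D = {}"
    unfolding classes_eq twcls_def by blast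
  show "\<And>C. C \<in> simplicial_twin_classes V E \<Longrightarrow> C \<noteq> {}"
    unfolding classes_eq twcls_def by blast
  show "finite (simplicial_twin_classes V E)" unfolding classes_eq using fin by simp
  show "\<And>C. C \<in> simplicial_twin_classes V E \<Longrightarrow> finite C" using C fin finite_subset by blast
  fix C x y assume Cc: "C \<in> simplicial_twin_classes V E" and xy: "x \<in> C" "y \<in> C" "x \<noteq> y"
  then obtain g where "C = twcls V E g" unfolding classes_eq by blast
  then have "closed_nbhd V E x = closed_nbhd V E y" using xy unfolding twcls_def by simp
  moreover have "y \<in> closed_nbhd V E y" by (simp add: closed_nbhd_def)
  ultimately have "y \<in> closed_nbhd V E x" by simp
  then show "E x y" using xy(3) by (simp add: closed_nbhd_def)
qed



lemma class_bound:
  fixes f :: "'a \<Rightarrow> nat set"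
  assumes fin: "finite C" and sub: "\<And>g. g \<in> C \<Longrightarrow> f g \<subseteq> {0..<n}"
    and same: "\<And>x y i j. x \<in> C \<Longrightarrow> y \<in> C \<Longrightarrow> x \<noteq> y \<Longrightarrow> i \<in> f x \<Longrightarrow> j \<in> f y \<Longrightarrow> i = j"
  shows "(\<Sum>g\<in>C. card (f g)) \<le> max (card C) n"
proof (cases "\<forall>g\<in>C. card (f g) \<le> 1")
  case True
  then have "(\<Sum>g\<in>C. card (f g)) \<le> (\<Sum>g\<in>C. 1)" by (intro sum_mono) simp
  then show ?thesis by simp
next
  case False
  then obtain g0 where g0: "g0 \<in> C" "\<not> card (f g0) \<le> 1" by blast
  have emp: "f g = {}" if g: "g \<in> C" "g \<noteq> g0" for g
  proof (rule ccontr)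
    assume "f g \<noteq> {}"
    then obtain j where j: "j \<in> f g" by blast
    have "f g0 \<subseteq> {j}" using same[OF g0(1) g(1) g(2)[symmetric] _ j] by blast
    then have "card (f g0) \<le> card {j}" by (intro card_mono) simp_all
    then have "card (f g0) \<le> 1" by simp
    then show False using g0(2) by simp
  qed
  have s1: "(\<Sum>g\<in>C. card (f g)) = card (f g0) + (\<Sum>g\<in>C - {g0}. card (f g))"
    using fin g0(1) by (rule sum.remove)
  have s2: "(\<Sum>g\<in>C - {g0}. card (f g)) = 0" using emp by (intro sum.neutral) simp
  have s3: "card (f g0) \<le> n"
    using card_mono[OF _ sub[OF g0(1)]] by simp
  show ?thesis using s1 s2 s3 by simp
qed

lemma upper:
  assumes sg: "simple_graph V E" and con: "connected_graph V E"
    and mu: "mu_t V E = card (simplicial_set V E)"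
    and X: "total_mv_set (V \<times> K_vertices n) (cart_edges E K_edges) X"
  shows "card X \<le> (\<Sum>C\<in>simplicial_twin_classes V E. max (card C) n)"
proof -
  define S where "S = simplicial_set V E"
  define f where "f = (\<lambda>g. {i. (g,i) \<in> X})"
  have XS: "X \<subseteq> S \<times> K_vertices n" unfolding S_def by (rule X_sub_S[OF sg con mu X])
  have finS: "finite S" using sg_facts(1)[OF sg] by (simp add: simplicial_set_def S_def)
  have fsub: "f g \<subseteq> {0..<n}" for g using XS by (auto simp: K_vertices_def f_def)
  have finf: "finite (f g)" for g using fsub finite_subset by blast
  have Xeq: "X = (\<Union>g\<in>S. {g} \<times> f g)" using XS unfolding f_def by blast
  have c1: "card X = (\<Sum>g\<in>S. card ({g} \<times> f g))"
    unfolding Xeq using finS finf by (intro card_UN_disjoint) blast+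
  have c2: "(\<Sum>g\<in>S. card ({g} \<times> f g)) = (\<Sum>g\<in>S. card (f g))" by (simp add: card_cartesian_product_singleton)
  have c3: "(\<Sum>g\<in>\<Union>(simplicial_twin_classes V E). card (f g)) = (sum \<circ> sum) (\<lambda>g. card (f g)) (simplicial_twin_classes V E)"
  proof (rule sum.Union_disjoint)
    show "\<forall>A\<in>simplicial_twin_classes V E. finite A" using classes_props(6)[OF sg] by blast
    show "\<forall>A\<in>simplicial_twin_classes V E. \<forall>B\<in>simplicial_twin_classes V E. A \<noteq> B \<longrightarrow> A \<inter> B = {}"
      using classes_props(3)[OF sg] by blast
  qed
  have c4: "(\<Sum>C\<in>simplicial_twin_classes V E. \<Sum>g\<in>C. card (f g)) \<le> (\<Sum>C\<in>simplicial_twin_classes V E. max (card C) n)"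
  proof (rule sum_mono)
    fix C assume C: "C \<in> simplicial_twin_classes V E"
    have fC: "finite C" using classes_props(6)[OF sg C] .
    have sm: "i = j" if "x \<in> C" "y \<in> C" "x \<noteq> y" "i \<in> f x" "j \<in> f y" for x y i j
    proof -
      have "E x y" using classes_props(4)[OF sg C that(1-3)] .
      moreover have "(x,i) \<in> X" "(y,j) \<in> X" using that(4,5) by (simp_all add: f_def)
      ultimately show "i = j" using adj_same[OF sg con X] by blast
    qed
    show "(\<Sum>g\<in>C. card (f g)) \<le> max (card C) n"
      by (rule class_bound[OF fC fsub]) (rule sm)
  qed
  have "\<Union>(simplicial_twin_classes V E) = S" using classes_props(1)[OF sg] by (simp add: S_def)
  then show ?thesis using c1 c2 c3 c4 by (simp add: o_def)
qed



definition rep :: "'a set \<Rightarrow> 'a" where "rep C = (SOME g. g \<in> C)"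

definition XC :: "nat \<Rightarrow> 'a set \<Rightarrow> ('a \<times> nat) set" where
  "XC n C = (if n \<le> card C then C \<times> {0} else {rep C} \<times> {0..<n})"

definition X0 :: "'a set \<Rightarrow> ('a \<Rightarrow> 'a \<Rightarrow> bool) \<Rightarrow> nat \<Rightarrow> ('a \<times> nat) set" where
  "X0 V E n = \<Union>(XC n ` simplicial_twin_classes V E)"

lemma rep_in: "C \<noteq> {} \<Longrightarrow> rep C \<in> C"
  unfolding rep_def by (rule someI_ex) blast

lemma adj_simp_nbhd:
  assumes sg: "simple_graph V E" and u: "u \<in> simplicial_set V E" and v: "v \<in> simplicial_set V E" and e: "E u v"
  shows "closed_nbhd V E u = closed_nbhd V E v"
proof -
  have su: "simplicial V E u" and sv: "simplicial V E v" using u v by (simp_all add: simplicial_set_def)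
  have uV: "u \<in> V" and vV: "v \<in> V" using u v by (simp_all add: simplicial_set_def)
  have evu: "E v u" using sg_facts(4)[OF sg e] .
  have a: "closed_nbhd V E a \<subseteq> closed_nbhd V E b" if s: "simplicial V E a" and eab: "E a b" and eba: "E b a" and aV: "a \<in> V" for a b
  proof
    fix x assume "x \<in> closed_nbhd V E a"
    then have "x = a \<or> (x \<in> V \<and> E a x)" by (simp add: closed_nbhd_def)
    then show "x \<in> closed_nbhd V E b"
    proof
      assume "x = a" then show ?thesis using eba aV by (simp add: closed_nbhd_def)
    next
      assume x: "x \<in> V \<and> E a x"
      show ?thesis
      proof (cases "x = b")
        case True then show ?thesis by (simp add: closed_nbhd_def)
      next
        case False
        then have "E b x" using s eab x unfolding simplicial_def by blast
        then show ?thesis using x by (simp add: closed_nbhd_def)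
      qed
    qed
  qed
  show ?thesis using a[OF su e evu uV] a[OF sv evu e vV] by (rule equalityI)
qed

lemma same_class:
  assumes sg: "simple_graph V E" and C: "C \<in> simplicial_twin_classes V E" and D: "D \<in> simplicial_twin_classes V E"
    and u: "u \<in> C" and v: "v \<in> D" and e: "E u v"
  shows "C = D"
proof -
  obtain g where g: "C = twcls V E g" using C unfolding classes_eq by blast
  obtain h where h: "D = twcls V E h" using D unfolding classes_eq by blast
  have uS: "u \<in> simplicial_set V E" and nu: "closed_nbhd V E u = closed_nbhd V E g" using u g by (simp_all add: twcls_def)
  have vS: "v \<in> simplicial_set V E" and nv: "closed_nbhd V E v = closed_nbhd V E h" using v h by (simp_all add: twcls_def)
  have "closed_nbhd V E u = closed_nbhd V E v" by (rule adj_simp_nbhd[OF sg uS vS e])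
  then have "closed_nbhd V E g = closed_nbhd V E h" using nu nv by simp
  then show ?thesis unfolding g h twcls_def by simp
qed

lemma XC_sub:
  assumes sg: "simple_graph V E" and C: "C \<in> simplicial_twin_classes V E" and n: "0 < n"
  shows "XC n C \<subseteq> C \<times> {0..<n}"
proof -
  have r: "rep C \<in> C" by (rule rep_in[OF classes_props(7)[OF sg C]])
  show ?thesis
  proof (cases "n \<le> card C")
    case True
    then have "XC n C = C \<times> {0}" unfolding XC_def by (rule if_P)
    then show ?thesis using n by (simp add: Sigma_mono)
  next
    case False
    then have "XC n C = {rep C} \<times> {0..<n}" unfolding XC_def by (rule if_not_P)
    then show ?thesis using r by (simp add: Sigma_mono)
  qed
qed

lemma X0_card:
  assumes sg: "simple_graph V E" and n: "0 < n"
  shows "card (X0 V E n) = (\<Sum>C\<in>simplicial_twin_classes V E. max (card C) n)"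
proof -
  have "card (X0 V E n) = (\<Sum>C\<in>simplicial_twin_classes V E. card (XC n C))"
    unfolding X0_def
  proof (rule card_UN_disjoint)
    show "finite (simplicial_twin_classes V E)" by (rule classes_props(5)[OF sg])
    show "\<forall>C\<in>simplicial_twin_classes V E. finite (XC n C)"
      using classes_props(6)[OF sg] unfolding XC_def by simp
    show "\<forall>C\<in>simplicial_twin_classes V E. \<forall>D\<in>simplicial_twin_classes V E. C \<noteq> D \<longrightarrow> XC n C \<inter> XC n D = {}"
    proof (intro ballI impI)
      fix C D assume C: "C \<in> simplicial_twin_classes V E" and D: "D \<in> simplicial_twin_classes V E" and ne: "C \<noteq> D"
      have "C \<inter> D = {}" using classes_props(3)[OF sg C D ne] .
      then show "XC n C \<inter> XC n D = {}" using XC_sub[OF sg C n] XC_sub[OF sg D n] by blast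
    qed
  qed
  also have "\<dots> = (\<Sum>C\<in>simplicial_twin_classes V E. max (card C) n)"
  proof (rule sum.cong)
    fix C assume C: "C \<in> simplicial_twin_classes V E"
    show "card (XC n C) = max (card C) n"
    proof (cases "n \<le> card C")
      case True
      then have "card (XC n C) = card (C \<times> {0::nat})" by (simp add: XC_def)
      also have "\<dots> = card C" by (simp add: card_cartesian_product)
      finally show ?thesis using True by simp
    next
      case False
      then have "card (XC n C) = card ({rep C} \<times> {0..<n})" by (simp add: XC_def)
      also have "\<dots> = n" by (simp add: card_cartesian_product_singleton)
      finally show ?thesis using False by simp
    qed
  qed simp
  finally show ?thesis .
qed

lemma X0_sub:
  assumes sg: "simple_graph V E" and n: "0 < n"
  shows "X0 V E n \<subseteq> simplicial_set V E \<times> K_vertices n"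
proof
  fix p assume "p \<in> X0 V E n"
  then obtain C where C: "C \<in> simplicial_twin_classes V E" and p: "p \<in> XC n C" unfolding X0_def by blast
  have "p \<in> C \<times> {0..<n}" using XC_sub[OF sg C n] p by blast
  then show "p \<in> simplicial_set V E \<times> K_vertices n" using classes_props(2)[OF sg C] unfolding K_vertices_def by blast
qed

lemma X0_Q:
  assumes sg: "simple_graph V E" and n: "0 < n" and e: "E u v"
    and uj: "(u,j) \<in> X0 V E n" and vi: "(v,i) \<in> X0 V E n"
  shows "i = j"
proof -
  obtain C where C: "C \<in> simplicial_twin_classes V E" and pu: "(u,j) \<in> XC n C" using uj unfolding X0_def by blast
  obtain D where D: "D \<in> simplicial_twin_classes V E" and pv: "(v,i) \<in> XC n D" using vi unfolding X0_def by blast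
  have "u \<in> C" using XC_sub[OF sg C n] pu by blast
  moreover have "v \<in> D" using XC_sub[OF sg D n] pv by blast
  ultimately have CD: "C = D" using same_class[OF sg C D _ _ e] by blast
  show ?thesis
  proof (cases "n \<le> card C")
    case True
    then show ?thesis using pu pv CD by (simp add: XC_def)
  next
    case False
    then have "u = rep C" "v = rep C" using pu pv CD by (simp_all add: XC_def)
    then show ?thesis using e sg_facts(5)[OF sg] by simp
  qed
qed



lemma walk_cons:
  assumes "walk_betw V E m xs v" "E u m" "u \<in> V"
  shows "walk_betw V E u (u # xs) v"
proof -
  have a: "xs \<noteq> []" "set xs \<subseteq> V" "successively E xs" "hd xs = m" "last xs = v"
    using assms(1) by (simp_all add: walk_iff)
  have "successively E (u # xs)" using a(1,3,4) assms(2) by (simp add: successively_Cons)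
  then show ?thesis using a assms(3) by (simp add: walk_iff)
qed

lemma X0_tmv:
  assumes sg: "simple_graph V E" and con: "connected_graph V E" and n: "0 < n"
  shows "total_mv_set (V \<times> K_vertices n) (cart_edges E K_edges) (X0 V E n)"
  unfolding total_mv_set_def
proof (intro conjI ballI)
  let ?X = "X0 V E n" and ?VH = "V \<times> K_vertices n" and ?EH = "cart_edges E K_edges"
  have XS: "?X \<subseteq> simplicial_set V E \<times> K_vertices n" by (rule X0_sub[OF sg n])
  have SV: "simplicial_set V E \<subseteq> V" unfolding simplicial_set_def by blast
  show "?X \<subseteq> ?VH" using XS SV by blast
  fix p q assume p: "p \<in> ?VH" and q: "q \<in> ?VH"
  obtain u i where pe: "p = (u,i)" by (cases p)
  obtain v j where qe: "q = (v,j)" by (cases q)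
  have uv: "u \<in> V" "v \<in> V" and ij: "i < n" "j < n" using p q pe qe by (simp_all add: K_vertices_def)
  have iK: "i \<in> K_vertices n" "j \<in> K_vertices n" using ij by (simp_all add: K_vertices_def)
  have "\<exists>ps0. walk_betw V E u ps0 v" using con uv by (simp add: connected_graph_def)
  then obtain ps0 where ps0: "walk_betw V E u ps0 v" by blast
  obtain ps where ps: "walk_betw V E u ps v" "length ps = Suc (gdist V E u v)" using gdist_ex[OF ps0] by blast
  have sp: "shortest_path V E u ps v" using ps by (simp add: shortest_path_def)
  have intG: "(x,k) \<notin> ?X" if x: "x \<in> set (butlast (tl ps))" for x k
  proof
    assume "(x,k) \<in> ?X"
    then have "x \<in> simplicial_set V E" using XS by blast
    then show False using simplicial_not_internal[OF sg sp x] by (simp add: simplicial_set_def)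
  qed
  have hd: "gdist ?VH ?EH (u,i) (v,j) = gdist V E u v + (if i = j then 0 else 1)"
    by (rule hdist[OF con uv ij])
  have ne: "ps \<noteq> []" and hps: "hd ps = u" and lps: "last ps = v" using ps(1) by (simp_all add: walk_iff)
  obtain rest where pse: "ps = u # rest" using ne hps by (cases ps) simp_all
  have "\<exists>ws. shortest_path ?VH ?EH (u,i) ws (v,j) \<and> set (butlast (tl ws)) \<inter> ?X = {}"
  proof (cases "i = j")
    case True
    let ?ws = "map (\<lambda>g. (g,i)) ps"
    have w: "walk_betw ?VH ?EH (u,i) ?ws (v,i)" by (rule lift_walk[OF ps(1) iK(1)])
    have "shortest_path ?VH ?EH (u,i) ?ws (v,j)"
      using w True hd ps(2) by (intro shortest_pathI) simp_all
    moreover have "set (butlast (tl ?ws)) \<inter> ?X = {}"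
    proof -
      have "butlast (tl ?ws) = map (\<lambda>g. (g,i)) (butlast (tl ps))" by (simp add: map_butlast map_tl)
      then show ?thesis using intG by auto
    qed
    ultimately show ?thesis by blast
  next
    case False
    show ?thesis
    proof (cases rest)
      case Nil
      then have vu: "v = u" using lps pse by simp
      let ?ws = "[(u,i),(u,j)]"
      have e: "?EH (u,i) (u,j)" using False by (simp add: cart_edges_def K_edges_def)
      have w: "walk_betw ?VH ?EH (u,i) ?ws (v,j)" using e uv iK vu by (simp add: walk_iff)
      have "length ps = 1" using pse Nil by simp
      then have "shortest_path ?VH ?EH (u,i) ?ws (v,j)"
        using w False hd ps(2) by (intro shortest_pathI) simp_all
      then show ?thesis by auto
    next
      case (Cons m bs)
      show ?thesis
      proof (cases bs)
        case Nil
        then have mv: "m = v" using lps pse Cons by simp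
        have euv: "E u v" using ps(1) pse Cons Nil mv by (simp add: walk_iff)
        have lp: "length ps = 2" using pse Cons Nil by simp
        show ?thesis
        proof (cases "(u,j) \<in> ?X")
          case False
          let ?ws = "[(u,i),(u,j),(v,j)]"
          have e1: "?EH (u,i) (u,j)" using \<open>i \<noteq> j\<close> by (simp add: cart_edges_def K_edges_def)
          have e2: "?EH (u,j) (v,j)" using euv by (simp add: cart_edges_def)
          have w: "walk_betw ?VH ?EH (u,i) ?ws (v,j)" using e1 e2 uv iK by (simp add: walk_iff)
          have "shortest_path ?VH ?EH (u,i) ?ws (v,j)"
            using w \<open>i \<noteq> j\<close> hd ps(2) lp by (intro shortest_pathI) simp_all
          moreover have "set (butlast (tl ?ws)) \<inter> ?X = {}" using False by simp
          ultimately show ?thesis by blast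
        next
          case True
          have vi: "(v,i) \<notin> ?X"
          proof
            assume "(v,i) \<in> ?X"
            then have "i = j" using X0_Q[OF sg n euv True] by blast
            then show False using \<open>i \<noteq> j\<close> by simp
          qed
          let ?ws = "[(u,i),(v,i),(v,j)]"
          have e1: "?EH (u,i) (v,i)" using euv by (simp add: cart_edges_def)
          have e2: "?EH (v,i) (v,j)" using \<open>i \<noteq> j\<close> by (simp add: cart_edges_def K_edges_def)
          have w: "walk_betw ?VH ?EH (u,i) ?ws (v,j)" using e1 e2 uv iK by (simp add: walk_iff)
          have "shortest_path ?VH ?EH (u,i) ?ws (v,j)"
            using w \<open>i \<noteq> j\<close> hd ps(2) lp by (intro shortest_pathI) simp_all
          moreover have "set (butlast (tl ?ws)) \<inter> ?X = {}" using vi by simp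
          ultimately show ?thesis by blast
        qed
      next
        case (Cons b bs')
        have bsne: "bs \<noteq> []" using Cons by simp
        have psf: "ps = u # m # bs" using pse \<open>rest = m # bs\<close> by simp
        have wm: "walk_betw V E m (m # bs) v"
          using ps(1) psf by (simp add: walk_iff successively_Cons)
        have eum: "E u m" using ps(1) psf by (simp add: walk_iff)
        have mV: "m \<in> V" using ps(1) psf by (simp add: walk_iff)
        let ?L = "map (\<lambda>g. (g,j)) (m # bs)"
        let ?ws = "(u,i) # (m,i) # ?L"
        have wL: "walk_betw ?VH ?EH (m,j) ?L (v,j)" by (rule lift_walk[OF wm iK(2)])
        have e1: "?EH (m,i) (m,j)" using \<open>i \<noteq> j\<close> by (simp add: cart_edges_def K_edges_def)
        have w1: "walk_betw ?VH ?EH (m,i) ((m,i) # ?L) (v,j)"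
          by (rule walk_cons[OF wL e1]) (simp add: mV iK)
        have e2: "?EH (u,i) (m,i)" using eum by (simp add: cart_edges_def)
        have w: "walk_betw ?VH ?EH (u,i) ?ws (v,j)"
          by (rule walk_cons[OF w1 e2]) (simp add: uv iK)
        have "shortest_path ?VH ?EH (u,i) ?ws (v,j)"
          using w \<open>i \<noteq> j\<close> hd ps(2) psf by (intro shortest_pathI) simp_all
        moreover have "set (butlast (tl ?ws)) \<inter> ?X = {}"
        proof -
          have bt: "butlast (tl ?ws) = (m,i) # map (\<lambda>g. (g,j)) (butlast (m # bs))"
            by (simp add: map_butlast)
          have mi: "m \<in> set (butlast (tl ps))" using psf bsne by simp
          have "butlast (tl ps) = butlast (m # bs)" using psf by simp
          then have "\<forall>x\<in>set (butlast (m # bs)). \<forall>k. (x,k) \<notin> ?X" using intG by metis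
          then show ?thesis unfolding bt using intG[OF mi] by auto
        qed
        ultimately show ?thesis by blast
      qed
    qed
  qed
  then show "X_visible ?VH ?EH ?X p q" unfolding pe qe X_visible_def .
qed



theorem theorem5p9:
  fixes V :: "'a set" and E :: "'a \<Rightarrow> 'a \<Rightarrow> bool" and n :: nat
  assumes "simple_graph V E"
    and "connected_graph V E"
    and "mu_t V E = card (simplicial_set V E)"
    and "n \<ge> 2"
  shows "mu_t (V \<times> K_vertices n) (cart_edges E K_edges)
           = (\<Sum>C\<in>simplicial_twin_classes V E. max (card C) n)"
proof -
  note sg = assms(1) and con = assms(2) and mu = assms(3)
  have n: "0 < n" using assms(4) by simp
  let ?A = "{card X | X. total_mv_set (V \<times> K_vertices n) (cart_edges E K_edges) X}"
  have finVH: "finite (V \<times> K_vertices n)" using sg_facts(1)[OF sg] by (simp add: K_vertices_def)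
  have "?A \<subseteq> {..card (V \<times> K_vertices n)}"
  proof
    fix c assume "c \<in> ?A"
    then obtain X where c: "c = card X" and X: "total_mv_set (V \<times> K_vertices n) (cart_edges E K_edges) X" by blast
    have "X \<subseteq> V \<times> K_vertices n" using X by (simp add: total_mv_set_def)
    then have "card X \<le> card (V \<times> K_vertices n)" by (rule card_mono[OF finVH])
    then show "c \<in> {..card (V \<times> K_vertices n)}" using c by simp
  qed
  then have finA: "finite ?A" by (rule finite_subset) simp
  show ?thesis unfolding mu_t_def
  proof (rule Max_eqI[OF finA])
    fix y assume "y \<in> ?A"
    then obtain X where y: "y = card X" and X: "total_mv_set (V \<times> K_vertices n) (cart_edges E K_edges) X" by blast
    show "y \<le> (\<Sum>C\<in>simplicial_twin_classes V E. max (card C) n)" using upper[OF sg con mu X] y by simp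
  next
    have "total_mv_set (V \<times> K_vertices n) (cart_edges E K_edges) (X0 V E n)" by (rule X0_tmv[OF sg con n])
    moreover have "card (X0 V E n) = (\<Sum>C\<in>simplicial_twin_classes V E. max (card C) n)" by (rule X0_card[OF sg n])
    ultimately have "\<exists>X. (\<Sum>C\<in>simplicial_twin_classes V E. max (card C) n) = card X \<and> total_mv_set (V \<times> K_vertices n) (cart_edges E K_edges) X"
      by (intro exI[of _ "X0 V E n"]) simp
    then show "(\<Sum>C\<in>simplicial_twin_classes V E. max (card C) n) \<in> ?A" by (simp only: mem_Collect_eq)
  qed
qed


end
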